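(* Let $\Gamma=(V,E)$ be a graph, let $M_v$ ($v\in V$) be monoids and $M=\Gamma_{v\in V}M_v$. Then for each vertex $v$, each element of $M$ has exactly one final $v$-component and exactly one final $v$-complement.
   Context: A graph $\Gamma=(V,E)$ has vertex set $V$ and irreflexive symmetric edge relation $E$. The graph product $M=\Gamma_{v\in V}M_v$ of pairwise disjoint monoids $M_v$ is the quotient of their free product by the congruence generated by $(mn,nm)$ for $m\in M_u$, $n\in M_v$, $(u,v)\in E$; each $M_v$ is identified with its (isomorphic) image in $M$. Let $X$ be the disjoint union of the sets $M_v\setminus\{1\}$, and for $m\in M_v\setminus\{1\}$ set $C(m)=v$. A word $x_1\circ\cdots\circ x_n$ in the free monoid $X^*$ is an expression for the element $x_1x_2\cdots x_n$ of $M$. It is reduced if whenever $i<j$ and $C(x_i)=C(x_j)$ there is $k$ with $i<k<j$ and $(C(x_i),C(x_k))\notin E$. For $a,a'\in M$, $v\in V$ and $c\in M_v\setminus\{1\}$: $a$ has final $v$-component $c$ and final $v$-complement $a'$ if $a$ has a reduced expression $a_1\circ\cdots\circ a_m\circ c$ with $a_1\cdots a_m=a'$. Also, $a$ has final $v$-component $1$ and final $v$-complement $a$ if $a$ has a reduced expression $a_1\circ\cdots\circ a_m$ such that either (i) $C(a_j)\ne v$ for all $j$, or (ii) there is $k$ with $(C(a_k),v)\notin E$ and $C(a_j)\neq v$ for all $j\ge k$. *)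

theory Defs
  imports "HOL-Algebra.Group"
begin

text \<open>The vertex monoids are HOL-Algebra monoids Mv v over a common
element type; their pairwise disjointness is realised by tagging each element
with its vertex, so a letter of X is a pair (v, m) with m a non-identity
element of Mv v, and C (v, m) = v.\<close>

definition gp_letters :: "('v \<Rightarrow> ('a, 'b) monoid_scheme) \<Rightarrow> ('v \<times> 'a) set" where
  "gp_letters Mv = {(v, m). m \<in> carrier (Mv v) \<and> m \<noteq> \<one>\<^bsub>Mv v\<^esub>}"

inductive gp_step :: "('v \<Rightarrow> ('a, 'b) monoid_scheme) \<Rightarrow> ('v \<times> 'v) set
    \<Rightarrow> ('v \<times> 'a) list \<Rightarrow> ('v \<times> 'a) list \<Rightarrow> bool"
  for Mv E where
  mult: "\<lbrakk> u \<in> lists (gp_letters Mv); w \<in> lists (gp_letters Mv);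
           (v, m) \<in> gp_letters Mv; (v, n) \<in> gp_letters Mv \<rbrakk> \<Longrightarrow>
         gp_step Mv E (u @ [(v, m), (v, n)] @ w)
           (u @ (if m \<otimes>\<^bsub>Mv v\<^esub> n = \<one>\<^bsub>Mv v\<^esub> then []
                 else [(v, m \<otimes>\<^bsub>Mv v\<^esub> n)]) @ w)"
| comm: "\<lbrakk> u \<in> lists (gp_letters Mv); w \<in> lists (gp_letters Mv);
           (v, m) \<in> gp_letters Mv; (v', n) \<in> gp_letters Mv; (v, v') \<in> E \<rbrakk> \<Longrightarrow>
         gp_step Mv E (u @ [(v, m), (v', n)] @ w) (u @ [(v', n), (v, m)] @ w)"

definition gp_rel :: "('v \<Rightarrow> ('a, 'b) monoid_scheme) \<Rightarrow> ('v \<times> 'v) set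
    \<Rightarrow> (('v \<times> 'a) list \<times> ('v \<times> 'a) list) set" where
  "gp_rel Mv E = {(p, q). p \<in> lists (gp_letters Mv) \<and> q \<in> lists (gp_letters Mv)
                      \<and> (symclp (gp_step Mv E))\<^sup>*\<^sup>* p q}"

definition gp_carrier :: "('v \<Rightarrow> ('a, 'b) monoid_scheme) \<Rightarrow> ('v \<times> 'v) set
    \<Rightarrow> ('v \<times> 'a) list set set" where
  "gp_carrier Mv E = lists (gp_letters Mv) // gp_rel Mv E"

definition gp_class :: "('v \<Rightarrow> ('a, 'b) monoid_scheme) \<Rightarrow> ('v \<times> 'v) set
    \<Rightarrow> ('v \<times> 'a) list \<Rightarrow> ('v \<times> 'a) list set" where
  "gp_class Mv E w = gp_rel Mv E `` {w}"

definition gp_reduced :: "('v \<times> 'v) set \<Rightarrow> ('v \<times> 'a) list \<Rightarrow> bool" where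
  "gp_reduced E w \<longleftrightarrow>
     (\<forall>i j. i < j \<and> j < length w \<and> fst (w ! i) = fst (w ! j) \<longrightarrow>
        (\<exists>k. i < k \<and> k < j \<and> (fst (w ! i), fst (w ! k)) \<notin> E))"

definition gp_final :: "('v \<Rightarrow> ('a, 'b) monoid_scheme) \<Rightarrow> ('v \<times> 'v) set \<Rightarrow> 'v
    \<Rightarrow> ('v \<times> 'a) list set \<Rightarrow> 'a \<Rightarrow> ('v \<times> 'a) list set \<Rightarrow> bool" where
  "gp_final Mv E v a c a' \<longleftrightarrow>
     (c \<in> carrier (Mv v) \<and> c \<noteq> \<one>\<^bsub>Mv v\<^esub> \<and>
        (\<exists>w \<in> lists (gp_letters Mv). gp_reduced E (w @ [(v, c)])
            \<and> gp_class Mv E (w @ [(v, c)]) = a \<and> gp_class Mv E w = a'))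
   \<or> (c = \<one>\<^bsub>Mv v\<^esub> \<and> a' = a \<and>
        (\<exists>w \<in> lists (gp_letters Mv). gp_reduced E w \<and> gp_class Mv E w = a \<and>
           ((\<forall>j < length w. fst (w ! j) \<noteq> v) \<or>
            (\<exists>k < length w. (fst (w ! k), v) \<notin> E \<and>
               (\<forall>j. k \<le> j \<and> j < length w \<longrightarrow> fst (w ! j) \<noteq> v)))))"

end

theory Submission
  imports Defs
begin

locale gpl =
  fixes Mv :: "'v \<Rightarrow> ('a, 'b) monoid_scheme" and E :: "('v \<times> 'v) set"
  assumes mon: "\<And>v. monoid (Mv v)"
    and symE: "sym E"
    and irr: "\<And>v. (v, v) \<notin> E"
begin

abbreviation "L \<equiv> gp_letters Mv"
abbreviation "R \<equiv> (symclp (gp_step Mv E))\<^sup>*\<^sup>*"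

lemma symE': "(a, b) \<in> E \<Longrightarrow> (b, a) \<in> E"
  using symE by (simp add: sym_def)

lemma step_lists: "gp_step Mv E p q \<Longrightarrow> p \<in> lists L \<and> q \<in> lists L"
proof (induction rule: gp_step.induct)
  case (mult u w v m n)
  have "m \<otimes>\<^bsub>Mv v\<^esub> n \<in> carrier (Mv v)"
    using mult monoid.m_closed[OF mon] by (auto simp: gp_letters_def)
  then show ?case using mult by (auto simp: gp_letters_def)
qed auto

lemma step_app: "gp_step Mv E p q \<Longrightarrow> s \<in> lists L \<Longrightarrow> gp_step Mv E (p @ s) (q @ s)"
proof (induction rule: gp_step.induct)
  case (mult u w v m n)
  have "gp_step Mv E (u @ [(v, m), (v, n)] @ (w @ s)) (u @ (if m \<otimes>\<^bsub>Mv v\<^esub> n = \<one>\<^bsub>Mv v\<^esub> then []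
                 else [(v, m \<otimes>\<^bsub>Mv v\<^esub> n)]) @ (w @ s))"
    by (rule gp_step.mult) (use mult in auto)
  then show ?case by simp
next
  case (comm u w v m v' n)
  have "gp_step Mv E (u @ [(v, m), (v', n)] @ (w @ s)) (u @ [(v', n), (v, m)] @ (w @ s))"
    by (rule gp_step.comm) (use comm in auto)
  then show ?case by simp
qed

lemma R_app: "R p q \<Longrightarrow> s \<in> lists L \<Longrightarrow> R (p @ s) (q @ s)"
proof (induction rule: rtranclp_induct)
  case base then show ?case by simp
next
  case (step y z)
  then have "symclp (gp_step Mv E) (y @ s) (z @ s)"
    using step_app by (auto simp: symclp_def)
  then show ?case using step by (meson rtranclp.rtrancl_into_rtrancl)
qed

lemma shuffle:
  assumes "u \<in> lists L" "w \<in> lists L" "x \<in> L" "s \<in> lists L"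
    "\<forall>y \<in> set s. (fst y, fst x) \<in> E"
  shows "R (u @ s @ [x] @ w) (u @ [x] @ s @ w)"
  using assms
proof (induction s arbitrary: w rule: rev_induct)
  case Nil then show ?case by simp
next
  case (snoc y s)
  obtain v m where y: "y = (v, m)" by force
  obtain v' n where x: "x = (v', n)" by force
  have st: "gp_step Mv E ((u @ s) @ [(v, m), (v', n)] @ w) ((u @ s) @ [(v', n), (v, m)] @ w)"
    apply (rule gp_step.comm) using snoc y x by auto
  have "R (u @ (s @ [y]) @ [x] @ w) (u @ s @ [x] @ ([y] @ w))"
    using st y x by (auto intro!: r_into_rtranclp simp: symclp_def)
  also have "R \<dots> (u @ [x] @ s @ ([y] @ w))"
    apply (rule snoc.IH) using snoc by auto
  finally show ?case by simp
qed


lemma equiv_rel: "equiv (lists L) (gp_rel Mv E)"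
  unfolding equiv_def refl_on_def sym_def trans_def gp_rel_def
  by (auto intro: rtranclp_symclp_sym rtranclp_trans)

lemma rel_intro: "R p q \<Longrightarrow> p \<in> lists L \<Longrightarrow> q \<in> lists L \<Longrightarrow> (p, q) \<in> gp_rel Mv E"
  by (simp add: gp_rel_def)

lemma class_eq: "R p q \<Longrightarrow> p \<in> lists L \<Longrightarrow> q \<in> lists L \<Longrightarrow> gp_class Mv E p = gp_class Mv E q"
  unfolding gp_class_def using equiv_class_eq[OF equiv_rel] rel_intro by blast

definition redL :: "('v \<times> 'a) list \<Rightarrow> bool" where
  "redL w \<longleftrightarrow> (\<forall>a x b y c. w = a @ x # b @ y # c \<and> fst x = fst y \<longrightarrow> (\<exists>z\<in>set b. (fst x, fst z) \<notin> E))"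

lemma decomp:
  assumes "i < j" "j < length w"
  shows "w = take i w @ w!i # take (j - Suc i) (drop (Suc i) w) @ w!j # drop (Suc j) w"
proof -
  have "w = take i w @ w!i # drop (Suc i) w" using assms by (simp add: id_take_nth_drop)
  moreover have "drop (Suc i) w = take (j - Suc i) (drop (Suc i) w) @ drop (j - Suc i) (drop (Suc i) w)"
    by (metis append_take_drop_id)
  moreover have "drop (j - Suc i) (drop (Suc i) w) = drop j w" using assms by simp
  moreover have "drop j w = w!j # drop (Suc j) w" using assms by (simp add: Cons_nth_drop_Suc)
  ultimately show ?thesis by metis
qed

lemma decomp_set:
  assumes "z \<in> set (take (j - Suc i) (drop (Suc i) w))" "i < j" "j < length w"
  shows "\<exists>k. i < k \<and> k < j \<and> w!k = z"
proof -
  from assms(1) obtain t where t: "t < length (take (j - Suc i) (drop (Suc i) w))"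
     "take (j - Suc i) (drop (Suc i) w) ! t = z" by (auto simp: in_set_conv_nth)
  then have "w ! (Suc i + t) = z" "t < j - Suc i" using assms by auto
  then show ?thesis by (intro exI[of _ "Suc i + t"]) auto
qed

lemma red_iff: "gp_reduced E w \<longleftrightarrow> redL w"
proof
  assume r: "gp_reduced E w"
  show "redL w" unfolding redL_def
  proof (intro allI impI)
    fix a x b y c assume h: "w = a @ x # b @ y # c \<and> fst x = fst y"
    define i where "i = length a"
    define j where "j = length a + Suc (length b)"
    have wi: "w!i = x" "w!j = y" "i < j" "j < length w" using h by (auto simp: i_def j_def nth_append)
    then obtain k where k: "i < k" "k < j" "(fst x, fst (w!k)) \<notin> E"
      using r h unfolding gp_reduced_def by metis
    have "w!k = b ! (k - Suc i)" using h k by (auto simp: i_def j_def nth_append)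
    moreover have "k - Suc i < length b" using k by (auto simp: i_def j_def)
    ultimately show "\<exists>z\<in>set b. (fst x, fst z) \<notin> E" using k by (metis nth_mem)
  qed
next
  assume r: "redL w"
  show "gp_reduced E w" unfolding gp_reduced_def
  proof (intro allI impI)
    fix i j assume h: "i < j \<and> j < length w \<and> fst (w ! i) = fst (w ! j)"
    then obtain z where z: "z \<in> set (take (j - Suc i) (drop (Suc i) w))" "(fst (w!i), fst z) \<notin> E"
      using r decomp[of i j w] unfolding redL_def by metis
    then show "\<exists>k>i. k < j \<and> (fst (w ! i), fst (w ! k)) \<notin> E"
      using decomp_set[OF z(1)] h by metis
  qed
qed

lemma shorten:
  assumes "w \<in> lists L" "\<not> redL w"
  shows "\<exists>w'. R w w' \<and> w' \<in> lists L \<and> length w' < length w"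
proof -
  obtain a x b y c where h: "w = a @ x # b @ y # c" "fst x = fst y"
    "\<forall>z\<in>set b. (fst x, fst z) \<in> E"
    using assms(2) unfolding redL_def by blast
  obtain v m where x: "x = (v, m)" by force
  obtain n where y: "y = (v, n)" using h(2) x by (metis prod.collapse fst_conv)
  have l: "a \<in> lists L" "x \<in> L" "b \<in> lists L" "y \<in> L" "c \<in> lists L" using assms(1) h by auto
  have "R ((a @ [x]) @ b @ [y] @ c) ((a @ [x]) @ [y] @ b @ c)"
    apply (rule shuffle) using l h(3) x y symE' by auto
  moreover
  define r where "r = (if m \<otimes>\<^bsub>Mv v\<^esub> n = \<one>\<^bsub>Mv v\<^esub> then [] else [(v, m \<otimes>\<^bsub>Mv v\<^esub> n)])"
  have st: "gp_step Mv E (a @ [(v, m), (v, n)] @ (b @ c)) (a @ r @ (b @ c))"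
    unfolding r_def by (rule gp_step.mult) (use l x y in auto)
  have "R ((a @ [x]) @ [y] @ b @ c) (a @ r @ b @ c)"
    using st x y by (auto intro!: r_into_rtranclp simp: symclp_def)
  ultimately have "R w (a @ r @ b @ c)" using h by (metis (no_types, lifting) append.assoc append_Cons
        append_Nil rtranclp_trans)
  moreover have "a @ r @ b @ c \<in> lists L" using step_lists[OF st] by simp
  moreover have "length (a @ r @ b @ c) < length w" using h by (auto simp: r_def)
  ultimately show ?thesis by blast
qed

lemma min_red:
  assumes "w \<in> lists L" "\<forall>w'. R w w' \<and> w' \<in> lists L \<longrightarrow> length w \<le> length w'"
  shows "redL w"
  using shorten[OF assms(1)] assms(2) by fastforce

definition proj :: "('v \<times> 'a) list \<Rightarrow> ('v \<times> 'v) \<Rightarrow> ('v \<times> 'a) list" where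
  "proj w ab = (if ab \<in> E then [] else filter (\<lambda>y. fst y = fst ab \<or> fst y = snd ab) w)"

definition shuff :: "(('v \<times> 'v) \<Rightarrow> ('v \<times> 'a) list) \<Rightarrow> 'v \<Rightarrow> bool" where
  "shuff P u \<longleftrightarrow> (\<forall>u'. (u, u') \<notin> E \<longrightarrow> P (u, u') \<noteq> [] \<and> fst (last (P (u, u'))) = u)"

definition upd :: "(('v \<times> 'v) \<Rightarrow> ('v \<times> 'a) list) \<Rightarrow> 'v \<Rightarrow> (('v \<times> 'a) list \<Rightarrow> ('v \<times> 'a) list)
   \<Rightarrow> ('v \<times> 'v) \<Rightarrow> ('v \<times> 'a) list" where
  "upd P u f = (\<lambda>ab. if (fst ab = u \<or> snd ab = u) \<and> ab \<notin> E then f (P ab) else P ab)"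

definition act :: "(('v \<times> 'v) \<Rightarrow> ('v \<times> 'a) list) \<Rightarrow> ('v \<times> 'a) \<Rightarrow> ('v \<times> 'v) \<Rightarrow> ('v \<times> 'a) list" where
  "act P x = (if shuff P (fst x) then
      (if snd (last (P (fst x, fst x))) \<otimes>\<^bsub>Mv (fst x)\<^esub> snd x = \<one>\<^bsub>Mv (fst x)\<^esub>
       then upd P (fst x) butlast
       else upd P (fst x) (\<lambda>s. butlast s @ [(fst x, snd (last (P (fst x, fst x))) \<otimes>\<^bsub>Mv (fst x)\<^esub> snd x)]))
     else upd P (fst x) (\<lambda>s. s @ [x]))"

definition Phi :: "('v \<times> 'a) list \<Rightarrow> ('v \<times> 'v) \<Rightarrow> ('v \<times> 'a) list" where
  "Phi w = foldl act (\<lambda>_. []) w"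

lemma act_app: "fst x = u \<Longrightarrow> upd (proj w) u (\<lambda>s. s @ [x]) = proj (w @ [x])"
  by (rule ext) (auto simp: upd_def proj_def)

lemma filt_zero:
  assumes "\<forall>y\<in>set w2. (u, fst y) \<in> E" "ab \<notin> E" "fst ab = u \<or> snd ab = u"
  shows "filter (\<lambda>y. fst y = fst ab \<or> fst y = snd ab) w2 = []"
proof -
  { fix y assume y: "y \<in> set w2" "fst y = fst ab \<or> fst y = snd ab"
    have e: "(u, fst y) \<in> E" using assms(1) y(1) by auto
    then have "(fst y, u) \<in> E" by (rule symE')
    then have False using y(2) assms(2,3) e irr by (cases ab) auto }
  then show ?thesis by (auto simp: filter_empty_conv)
qed

lemma proj_split_touched:
  assumes "\<forall>y\<in>set w2. (u, fst y) \<in> E" "ab \<notin> E" "fst ab = u \<or> snd ab = u"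
  shows "proj (w1 @ (u, l) # w2) ab = proj w1 ab @ [(u, l)]"
    "proj (w1 @ w2) ab = proj w1 ab"
  using filt_zero[OF assms] assms(2,3) by (auto simp: proj_def)

lemma proj_split_untouched:
  assumes "\<not> ((fst ab = u \<or> snd ab = u) \<and> ab \<notin> E)"
  shows "proj (w1 @ (u, l) # w2) ab = proj (w1 @ w2) ab"
  using assms by (cases ab) (auto simp: proj_def)

lemma act_split:
  assumes "\<forall>y\<in>set w2. (u, fst y) \<in> E"
  shows "shuff (proj (w1 @ (u, l) # w2)) u"
    "last (proj (w1 @ (u, l) # w2) (u, u)) = (u, l)"
    "upd (proj (w1 @ (u, l) # w2)) u butlast = proj (w1 @ w2)"
    "upd (proj (w1 @ (u, l) # w2)) u (\<lambda>s. butlast s @ [(u, q)]) = proj (w1 @ (u, q) # w2)"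
proof -
  show "shuff (proj (w1 @ (u, l) # w2)) u"
    unfolding shuff_def using proj_split_touched(1)[OF assms] by simp
  show "last (proj (w1 @ (u, l) # w2) (u, u)) = (u, l)"
    using proj_split_touched(1)[OF assms, of "(u,u)"] irr by simp
  show "upd (proj (w1 @ (u, l) # w2)) u butlast = proj (w1 @ w2)"
    apply (rule ext) subgoal for ab
      using proj_split_touched[OF assms, of ab] proj_split_untouched[of ab u w1 l w2]
      by (auto simp: upd_def) done
  show "upd (proj (w1 @ (u, l) # w2)) u (\<lambda>s. butlast s @ [(u, q)]) = proj (w1 @ (u, q) # w2)"
    apply (rule ext) subgoal for ab
      using proj_split_touched[OF assms, of ab] proj_split_touched(1)[OF assms, of ab w1 q]
        proj_split_untouched[of ab u w1 l w2] proj_split_untouched[of ab u w1 q w2]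
      by (auto simp: upd_def) done
qed

lemma proj_move:
  assumes "\<forall>y\<in>set s. (u, fst y) \<in> E"
  shows "proj (a @ (u, l) # s) = proj (a @ s @ [(u, l)])"
proof (rule ext)
  fix ab
  show "proj (a @ (u, l) # s) ab = proj (a @ s @ [(u, l)]) ab"
  proof (cases "(fst ab = u \<or> snd ab = u) \<and> ab \<notin> E")
    case True
    then show ?thesis using proj_split_touched(1)[OF assms, of ab a l] filt_zero[OF assms, of ab]
      by (auto simp: proj_def)
  next
    case False
    then show ?thesis by (cases ab) (auto simp: proj_def)
  qed
qed

lemma filter_last_split:
  "filter P w \<noteq> [] \<Longrightarrow> \<exists>a z b. w = a @ z # b \<and> P z \<and> (\<forall>y\<in>set b. \<not> P y) \<and> last (filter P w) = z"
proof (induction w rule: rev_induct)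
  case Nil then show ?case by simp
next
  case (snoc x xs)
  show ?case
  proof (cases "P x")
    case True then show ?thesis by (intro exI[of _ xs] exI[of _ x] exI[of _ "[]"]) auto
  next
    case False
    then obtain a z b where "xs = a @ z # b" "P z" "\<forall>y\<in>set b. \<not> P y" "last (filter P xs) = z"
      using snoc by auto
    then show ?thesis using False by (intro exI[of _ a] exI[of _ z] exI[of _ "b @ [x]"]) auto
  qed
qed

lemma shuff_split:
  assumes "shuff (proj w) u"
  shows "\<exists>w1 l w2. w = w1 @ (u, l) # w2 \<and> (\<forall>y\<in>set w2. (u, fst y) \<in> E)"
proof -
  have "proj w (u, u) \<noteq> []" using assms irr unfolding shuff_def by blast
  then have ne: "filter (\<lambda>y. fst y = u) w \<noteq> []" using irr by (simp add: proj_def)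
  obtain a z b where h: "w = a @ z # b" "fst z = u" "\<forall>y\<in>set b. fst y \<noteq> u"
    using filter_last_split[OF ne] by blast
  have "\<forall>y\<in>set b. (u, fst y) \<in> E"
  proof
    fix y assume y: "y \<in> set b"
    show "(u, fst y) \<in> E"
    proof (rule ccontr)
      assume ne: "(u, fst y) \<notin> E"
      let ?f = "filter (\<lambda>t. fst t = u \<or> fst t = fst y) b"
      have fne: "?f \<noteq> []" using y by (auto simp: filter_empty_conv)
      have "last ?f \<in> set b" using fne by (metis last_in_set filter_is_subset subsetD)
      then have "fst (last ?f) \<noteq> u" using h(3) by auto
      moreover have "proj w (u, fst y) = filter (\<lambda>t. fst t = u \<or> fst t = fst y) (a @ [z]) @ ?f"
        using ne h(1) by (simp add: proj_def)
      then have "last (proj w (u, fst y)) = last ?f" using fne by simp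
      ultimately show False using assms ne unfolding shuff_def by metis
    qed
  qed
  then show ?thesis using h by (metis prod.collapse)
qed

lemma redL_Nil: "redL []" by (auto simp: redL_def)

lemma redL_butlast: "redL (w @ [x]) \<Longrightarrow> redL w"
  unfolding redL_def
proof (intro allI impI)
  fix a x' b y c
  assume r: "\<forall>a xa b y c. w @ [x] = a @ xa # b @ y # c \<and> fst xa = fst y \<longrightarrow> (\<exists>z\<in>set b. (fst xa, fst z) \<notin> E)"
    and h: "w = a @ x' # b @ y # c \<and> fst x' = fst y"
  then show "\<exists>z\<in>set b. (fst x', fst z) \<notin> E" using r[rule_format, of a x' b y "c @ [x]"] by simp
qed

lemma red_fst: "gp_reduced E w \<longleftrightarrow> (\<forall>i j. i < j \<and> j < length (map fst w) \<and> map fst w ! i = map fst w ! j \<longrightarrow>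
        (\<exists>k. i < k \<and> k < j \<and> (map fst w ! i, map fst w ! k) \<notin> E))"
  unfolding gp_reduced_def
proof (intro iff_allI iffI impI)
  fix i j
  show "i < j \<and> j < length w \<and> fst (w ! i) = fst (w ! j) \<longrightarrow> (\<exists>k>i. k < j \<and> (fst (w ! i), fst (w ! k)) \<notin> E) \<Longrightarrow>
       i < j \<and> j < length (map fst w) \<and> map fst w ! i = map fst w ! j \<Longrightarrow>
       \<exists>k>i. k < j \<and> (map fst w ! i, map fst w ! k) \<notin> E"
  proof -
    assume a: "i < j \<and> j < length w \<and> fst (w ! i) = fst (w ! j) \<longrightarrow> (\<exists>k>i. k < j \<and> (fst (w ! i), fst (w ! k)) \<notin> E)"
      and b: "i < j \<and> j < length (map fst w) \<and> map fst w ! i = map fst w ! j"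
    then obtain k where "i < k" "k < j" "(fst (w ! i), fst (w ! k)) \<notin> E" by auto
    then show ?thesis using b by (intro exI[of _ k]) auto
  qed
  show "i < j \<and> j < length (map fst w) \<and> map fst w ! i = map fst w ! j \<longrightarrow> (\<exists>k>i. k < j \<and> (map fst w ! i, map fst w ! k) \<notin> E) \<Longrightarrow>
       i < j \<and> j < length w \<and> fst (w ! i) = fst (w ! j) \<Longrightarrow>
       \<exists>k>i. k < j \<and> (fst (w ! i), fst (w ! k)) \<notin> E"
  proof -
    assume a: "i < j \<and> j < length (map fst w) \<and> map fst w ! i = map fst w ! j \<longrightarrow> (\<exists>k>i. k < j \<and> (map fst w ! i, map fst w ! k) \<notin> E)"
      and b: "i < j \<and> j < length w \<and> fst (w ! i) = fst (w ! j)"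
    then obtain k where "i < k" "k < j" "(map fst w ! i, map fst w ! k) \<notin> E" by auto
    then show ?thesis using b by (intro exI[of _ k]) auto
  qed
qed

lemma red_map: "map fst w = map fst w' \<Longrightarrow> gp_reduced E w = gp_reduced E w'"
  by (simp add: red_fst)

lemma redL_repl: "redL (w1 @ (u, l) # w2) \<Longrightarrow> redL (w1 @ (u, q) # w2)"
  using red_map[of "w1 @ (u, l) # w2" "w1 @ (u, q) # w2"] red_iff by simp

lemma redL_snoc:
  assumes r: "redL w" and ns: "\<not> shuff (proj w) (fst x)"
  shows "redL (w @ [x])"
  unfolding redL_def
proof (intro allI impI)
  fix a x1 b y c assume h: "w @ [x] = a @ x1 # b @ y # c \<and> fst x1 = fst y"
  show "\<exists>z\<in>set b. (fst x1, fst z) \<notin> E"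
  proof (cases c rule: rev_cases)
    case (snoc c' z')
    then have "w = a @ x1 # b @ y # c'" using h by simp
    then show ?thesis using r[unfolded redL_def, rule_format, of a x1 b y c'] h by blast
  next
    case Nil
    then have w: "w = a @ x1 # b" and yx: "y = x" using h by auto
    let ?u = "fst x"
    obtain u' where u': "(?u, u') \<notin> E" "proj w (?u, u') = [] \<or> fst (last (proj w (?u, u'))) \<noteq> ?u"
      using ns unfolding shuff_def by blast
    let ?f = "filter (\<lambda>t. fst t = ?u \<or> fst t = u') b"
    have pw: "proj w (?u, u') = filter (\<lambda>t. fst t = ?u \<or> fst t = u') a @ x1 # ?f"
      using u'(1) w h yx by (simp add: proj_def)
    have fne: "?f \<noteq> []"
    proof
      assume "?f = []"
      then show False using u'(2) pw h yx by simp
    qed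
    then have lf: "last (proj w (?u, u')) = last ?f" using pw by simp
    have lb: "last ?f \<in> set b" using fne by (metis last_in_set filter_is_subset subsetD)
    have "fst (last ?f) = ?u \<or> fst (last ?f) = u'" using fne
      by (metis (mono_tags, lifting) last_in_set mem_Collect_eq set_filter)
    then have "fst (last ?f) = u'" using u'(2) lf fne pw by auto
    then show ?thesis using lb u'(1) h yx by (intro bexI[of _ "last ?f"]) auto
  qed
qed

lemma not_shuff_snoc: "redL (w @ [x]) \<Longrightarrow> \<not> shuff (proj w) (fst x)"
proof
  assume r: "redL (w @ [x])" and s: "shuff (proj w) (fst x)"
  obtain w1 l w2 where h: "w = w1 @ (fst x, l) # w2" "\<forall>y\<in>set w2. (fst x, fst y) \<in> E"
    using shuff_split[OF s] by blast
  have "w @ [x] = w1 @ (fst x, l) # w2 @ x # []" using h by simp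
  then obtain z where "z \<in> set w2" "(fst x, fst z) \<notin> E"
    using r[unfolded redL_def, rule_format, of w1 "(fst x, l)" w2 x "[]"] by auto
  then show False using h by auto
qed

lemma redL_del:
  assumes r: "redL (w1 @ (u, l) # w2)" and adj: "\<forall>y\<in>set w2. (u, fst y) \<in> E"
  shows "redL (w1 @ w2)"
  unfolding redL_def
proof (intro allI impI)
  fix a x b y c assume h: "w1 @ w2 = a @ x # b @ y # c \<and> fst x = fst y"
  have ry: "\<And>B C. w1 @ (u, l) # w2 = a @ x # B @ y # C \<Longrightarrow> \<exists>z\<in>set B. (fst x, fst z) \<notin> E"
    using r[unfolded redL_def, rule_format, of a x _ y] h by blast
  have noblock: "y \<in> set w2 \<Longrightarrow> (fst x, u) \<in> E" using adj h symE' by auto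
  from h have "w1 @ w2 = a @ (x # b @ y # c)" by simp
  then show "\<exists>z\<in>set b. (fst x, fst z) \<notin> E"
    unfolding append_eq_append_conv2
  proof (elim exE disjE conjE)
    fix us assume A: "w1 = a @ us" "us @ w2 = x # b @ y # c"
    show ?thesis
    proof (cases us)
      case Nil
      then have "w1 @ (u, l) # w2 = (a @ [(u, l)]) @ x # b @ y # c" using A by simp
      then show ?thesis using r[unfolded redL_def, rule_format, of "a @ [(u, l)]" x b y c] h by simp
    next
      case (Cons x' us')
      then have xx: "x' = x" "us' @ w2 = b @ (y # c)" using A by auto
      from xx(2) show ?thesis unfolding append_eq_append_conv2
      proof (elim exE disjE conjE)
        fix vs assume B: "us' = b @ vs" "vs @ w2 = y # c"
        show ?thesis
        proof (cases vs)
          case Nil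
          then have "w1 @ (u, l) # w2 = a @ x # (b @ [(u, l)]) @ y # c" "y \<in> set w2"
            using A B Cons xx by auto
          then obtain z where "z \<in> set (b @ [(u, l)])" "(fst x, fst z) \<notin> E" using ry by blast
          then show ?thesis using noblock \<open>y \<in> set w2\<close> by auto
        next
          case (Cons y' vs')
          then have "w1 @ (u, l) # w2 = a @ x # b @ y # (vs' @ (u, l) # w2)"
            using A B Cons xx \<open>us = x' # us'\<close> by auto
          then show ?thesis using ry by blast
        qed
      next
        fix vs assume B: "us' @ vs = b" "w2 = vs @ y # c"
        then have "w1 @ (u, l) # w2 = a @ x # (us' @ (u, l) # vs) @ y # c" "y \<in> set w2"
          using A Cons xx by auto
        then obtain z where "z \<in> set (us' @ (u, l) # vs)" "(fst x, fst z) \<notin> E" using ry by blast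
        then show ?thesis using B noblock \<open>y \<in> set w2\<close> by auto
      qed
    qed
  next
    fix us assume A: "w1 @ us = a" "w2 = us @ x # b @ y # c"
    then have "w1 @ (u, l) # w2 = (w1 @ (u, l) # us) @ x # b @ y # c" by simp
    then show ?thesis using r[unfolded redL_def, rule_format, of "w1 @ (u, l) # us" x b y c] h by simp
  qed
qed

lemma not_shuff_del:
  assumes r: "redL (w1 @ (u, l) # w2)" and adj: "\<forall>y\<in>set w2. (u, fst y) \<in> E"
  shows "\<not> shuff (proj (w1 @ w2)) u"
proof
  assume "shuff (proj (w1 @ w2)) u"
  then obtain w1' l' w2' where h: "w1 @ w2 = w1' @ ((u, l') # w2')" "\<forall>y\<in>set w2'. (u, fst y) \<in> E"
    using shuff_split by fastforce
  from h(1) show False unfolding append_eq_append_conv2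
  proof (elim exE disjE conjE)
    fix us assume A: "w1 = w1' @ us" "us @ w2 = (u, l') # w2'"
    show False
    proof (cases us)
      case Nil
      then show False using A adj irr by (cases w2) auto
    next
      case (Cons z us')
      then have "w1 @ (u, l) # w2 = w1' @ (u, l') # us' @ (u, l) # w2" "set us' \<subseteq> set w2'"
        using A by auto
      then obtain z where "z \<in> set us'" "(u, fst z) \<notin> E"
        using r[unfolded redL_def, rule_format, of w1' "(u, l')" us' "(u, l)" w2] by auto
      then show False using h(2) \<open>set us' \<subseteq> set w2'\<close> by auto
    qed
  next
    fix us assume "w1 @ us = w1'" "w2 = us @ (u, l') # w2'"
    then show False using adj irr by auto
  qed
qed

definition G :: "(('v \<times> 'v) \<Rightarrow> ('v \<times> 'a) list) \<Rightarrow> ('v \<times> 'a) \<Rightarrow> ('v \<times> 'a) list \<Rightarrow> ('v \<times> 'a) list" where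
  "G P x = (if shuff P (fst x) then
      (if snd (last (P (fst x, fst x))) \<otimes>\<^bsub>Mv (fst x)\<^esub> snd x = \<one>\<^bsub>Mv (fst x)\<^esub>
       then butlast
       else (\<lambda>s. butlast s @ [(fst x, snd (last (P (fst x, fst x))) \<otimes>\<^bsub>Mv (fst x)\<^esub> snd x)]))
     else (\<lambda>s. s @ [x]))"

lemma act_G: "act P x = upd P (fst x) (G P x)"
  by (simp add: act_def G_def)

lemma upd_other: "(u1, u2) \<in> E \<Longrightarrow> (u2, u') \<notin> E \<Longrightarrow> upd P u1 f (u2, u') = P (u2, u')"
  using irr symE' by (auto simp: upd_def)

lemma G_upd: "(u1, fst y) \<in> E \<Longrightarrow> G (upd P u1 f) y = G P y"
proof -
  assume e: "(u1, fst y) \<in> E"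
  have s: "shuff (upd P u1 f) (fst y) = shuff P (fst y)"
    unfolding shuff_def using upd_other[OF e] by simp
  have "upd P u1 f (fst y, fst y) = P (fst y, fst y)" using upd_other[OF e] irr by simp
  then show ?thesis using s by (simp add: G_def)
qed

lemma upd_comm: "(u1, u2) \<in> E \<Longrightarrow> upd (upd P u1 f) u2 g = upd (upd P u2 g) u1 f"
  by (rule ext) (use irr symE' in \<open>auto simp: upd_def\<close>)

lemma act_comm:
  assumes "(fst x, fst y) \<in> E"
  shows "act (act P x) y = act (act P y) x"
proof -
  have "act (act P x) y = upd (upd P (fst x) (G P x)) (fst y) (G P y)"
    using G_upd[OF assms] by (simp add: act_G)
  also have "\<dots> = upd (upd P (fst y) (G P y)) (fst x) (G P x)" using upd_comm[OF assms] by simp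
  also have "\<dots> = act (act P y) x"
    using G_upd[of "fst y" x] symE'[OF assms] by (simp add: act_G)
  finally show ?thesis .
qed

lemma act_not: "\<not> shuff P (fst x) \<Longrightarrow> act P x = upd P (fst x) (\<lambda>s. s @ [x])"
  by (simp add: act_def)

lemma act_not_proj: "\<not> shuff (proj w) (fst x) \<Longrightarrow> act (proj w) x = proj (w @ [x])"
  using act_not act_app by simp

lemma act_sp:
  assumes "\<forall>y\<in>set w2. (u, fst y) \<in> E"
  shows "act (proj (w1 @ (u, l) # w2)) (u, m) =
    (if l \<otimes>\<^bsub>Mv u\<^esub> m = \<one>\<^bsub>Mv u\<^esub> then proj (w1 @ w2) else proj (w1 @ (u, l \<otimes>\<^bsub>Mv u\<^esub> m) # w2))"
  using act_split[OF assms] by (simp add: act_def)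

lemma lists_split: "w1 @ (u, l) # w2 \<in> lists L \<Longrightarrow> l \<in> carrier (Mv u) \<and> l \<noteq> \<one>\<^bsub>Mv u\<^esub>"
  by (auto simp: gp_letters_def)

lemma act_I:
  assumes "w \<in> lists L" "redL w" "x \<in> L"
  shows "\<exists>w'. w' \<in> lists L \<and> redL w' \<and> act (proj w) x = proj w'"
proof (cases "shuff (proj w) (fst x)")
  case False
  then show ?thesis using assms act_not_proj redL_snoc by (intro exI[of _ "w @ [x]"]) auto
next
  case True
  obtain u m where x: "x = (u, m)" by force
  obtain w1 l w2 where h: "w = w1 @ (u, l) # w2" "\<forall>y\<in>set w2. (u, fst y) \<in> E"
    using shuff_split True x by fastforce
  have lc: "l \<in> carrier (Mv u)" "m \<in> carrier (Mv u)" using lists_split assms h x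
    by (auto simp: gp_letters_def)
  show ?thesis
  proof (cases "l \<otimes>\<^bsub>Mv u\<^esub> m = \<one>\<^bsub>Mv u\<^esub>")
    case True
    then show ?thesis using act_sp[OF h(2)] assms h x redL_del[of w1 u l w2]
      by (intro exI[of _ "w1 @ w2"]) auto
  next
    case False
    have "l \<otimes>\<^bsub>Mv u\<^esub> m \<in> carrier (Mv u)" using lc monoid.m_closed[OF mon] by blast
    then have "w1 @ (u, l \<otimes>\<^bsub>Mv u\<^esub> m) # w2 \<in> lists L" using assms h False by (auto simp: gp_letters_def)
    then show ?thesis using act_sp[OF h(2)] assms h x redL_repl False
      by (intro exI[of _ "w1 @ (u, l \<otimes>\<^bsub>Mv u\<^esub> m) # w2"]) auto
  qed
qed

lemma act_mult:
  assumes w: "w \<in> lists L" "redL w" and xy: "(u, m) \<in> L" "(u, n) \<in> L"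
  shows "act (act (proj w) (u, m)) (u, n) =
    (if m \<otimes>\<^bsub>Mv u\<^esub> n = \<one>\<^bsub>Mv u\<^esub> then proj w else act (proj w) (u, m \<otimes>\<^bsub>Mv u\<^esub> n))"
proof -
  interpret M: monoid "Mv u" by (rule mon)
  have mc: "m \<in> carrier (Mv u)" "n \<in> carrier (Mv u)" "m \<noteq> \<one>\<^bsub>Mv u\<^esub>" "n \<noteq> \<one>\<^bsub>Mv u\<^esub>"
    using xy by (auto simp: gp_letters_def)
  show ?thesis
  proof (cases "shuff (proj w) u")
    case False
    then have a1: "act (proj w) (u, m) = proj (w @ (u, m) # [])" using act_not_proj[of w "(u,m)"] by simp
    have a2: "act (proj (w @ (u, m) # [])) (u, n) =
      (if m \<otimes>\<^bsub>Mv u\<^esub> n = \<one>\<^bsub>Mv u\<^esub> then proj (w @ []) else proj (w @ (u, m \<otimes>\<^bsub>Mv u\<^esub> n) # []))"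
      by (rule act_sp) simp
    show ?thesis using a1 a2 False act_not_proj[of w "(u, m \<otimes>\<^bsub>Mv u\<^esub> n)"] by simp
  next
    case True
    obtain w1 l w2 where h: "w = w1 @ (u, l) # w2" "\<forall>y\<in>set w2. (u, fst y) \<in> E"
      using shuff_split[OF True] by blast
    have lc: "l \<in> carrier (Mv u)" "l \<noteq> \<one>\<^bsub>Mv u\<^esub>" using lists_split w h by auto
    have sp: "\<And>r. act (proj w) (u, r) = (if l \<otimes>\<^bsub>Mv u\<^esub> r = \<one>\<^bsub>Mv u\<^esub> then proj (w1 @ w2) else proj (w1 @ (u, l \<otimes>\<^bsub>Mv u\<^esub> r) # w2))"
      using act_sp[OF h(2)] h by simp
    show ?thesis
    proof (cases "l \<otimes>\<^bsub>Mv u\<^esub> m = \<one>\<^bsub>Mv u\<^esub>")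
      case q1: True
      have ns: "\<not> shuff (proj (w1 @ w2)) u" using not_shuff_del[of w1 u l w2] w h by simp
      have a2: "act (act (proj w) (u, m)) (u, n) = proj (w1 @ w2 @ [(u, n)])"
        using sp[of m] q1 act_not_proj[of "w1 @ w2" "(u,n)"] ns by simp
      have mv: "proj (w1 @ (u, n) # w2) = proj (w1 @ w2 @ [(u, n)])" using proj_move[OF h(2)] by simp
      have ln: "l \<otimes>\<^bsub>Mv u\<^esub> (m \<otimes>\<^bsub>Mv u\<^esub> n) = n"
        using q1 mc lc by (simp add: M.m_assoc[symmetric])
      show ?thesis
      proof (cases "m \<otimes>\<^bsub>Mv u\<^esub> n = \<one>\<^bsub>Mv u\<^esub>")
        case True
        then have "n = l" using ln lc by simp
        then show ?thesis using a2 mv True h by simp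
      next
        case False
        then show ?thesis using a2 mv sp[of "m \<otimes>\<^bsub>Mv u\<^esub> n"] ln mc by simp
      qed
    next
      case q1: False
      let ?q = "l \<otimes>\<^bsub>Mv u\<^esub> m"
      have a1: "act (proj w) (u, m) = proj (w1 @ (u, ?q) # w2)" using sp[of m] q1 by simp
      have a2: "act (proj (w1 @ (u, ?q) # w2)) (u, n) = (if ?q \<otimes>\<^bsub>Mv u\<^esub> n = \<one>\<^bsub>Mv u\<^esub> then proj (w1 @ w2)
         else proj (w1 @ (u, ?q \<otimes>\<^bsub>Mv u\<^esub> n) # w2))" using act_sp[OF h(2)] by simp
      have as: "?q \<otimes>\<^bsub>Mv u\<^esub> n = l \<otimes>\<^bsub>Mv u\<^esub> (m \<otimes>\<^bsub>Mv u\<^esub> n)" using mc lc by (simp add: M.m_assoc)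
      show ?thesis
      proof (cases "m \<otimes>\<^bsub>Mv u\<^esub> n = \<one>\<^bsub>Mv u\<^esub>")
        case True
        then show ?thesis using a1 a2 as lc h by simp
      next
        case False
        then show ?thesis using a1 a2 as sp[of "m \<otimes>\<^bsub>Mv u\<^esub> n"] by simp
      qed
    qed
  qed
qed

lemma Phi_app: "Phi (u @ s) = foldl act (Phi u) s"
  by (simp add: Phi_def)

lemma proj_Nil: "proj [] = (\<lambda>_. [])"
  by (rule ext) (simp add: proj_def)

lemma Phi_I: "w \<in> lists L \<Longrightarrow> \<exists>w'. w' \<in> lists L \<and> redL w' \<and> Phi w = proj w'"
proof (induction w rule: rev_induct)
  case Nil
  then show ?case using redL_Nil proj_Nil by (intro exI[of _ "[]"]) (auto simp: Phi_def)
next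
  case (snoc x xs)
  then obtain w' where "w' \<in> lists L" "redL w'" "Phi xs = proj w'" by auto
  then show ?case using act_I[of w' x] snoc.prems by (auto simp: Phi_app)
qed

lemma Phi_red: "w \<in> lists L \<Longrightarrow> redL w \<Longrightarrow> Phi w = proj w"
proof (induction w rule: rev_induct)
  case Nil
  then show ?case using proj_Nil by (simp add: Phi_def)
next
  case (snoc x xs)
  then have "Phi xs = proj xs" using redL_butlast by auto
  then show ?case using act_not_proj not_shuff_snoc[OF snoc.prems(2)] by (simp add: Phi_app)
qed

lemma Phi_step: "gp_step Mv E p q \<Longrightarrow> Phi p = Phi q"
proof (induction rule: gp_step.induct)
  case (mult u w v m n)
  obtain w' where w': "w' \<in> lists L" "redL w'" "Phi u = proj w'" using Phi_I[OF mult(1)] by blast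
  show ?case using act_mult[OF w' (1,2) mult(3,4)] w'(3) by (simp add: Phi_app)
next
  case (comm u w v m v' n)
  show ?case using act_comm[of "(v, m)" "(v', n)" "Phi u"] comm by (simp add: Phi_app)
qed

lemma Phi_R: "R p q \<Longrightarrow> Phi p = Phi q"
  by (induction rule: rtranclp_induct) (auto simp: symclp_def dest: Phi_step)

lemma proj_snoc_cancel: "proj (p @ [x]) = proj (q @ [x]) \<Longrightarrow> proj p = proj q"
proof (rule ext)
  fix ab assume h: "proj (p @ [x]) = proj (q @ [x])"
  then have "proj (p @ [x]) ab = proj (q @ [x]) ab" by simp
  then show "proj p ab = proj q ab" by (simp add: proj_def split: if_splits)
qed

lemma proj_eq_R: "w1 \<in> lists L \<Longrightarrow> w2 \<in> lists L \<Longrightarrow> proj w1 = proj w2 \<Longrightarrow> R w1 w2"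
proof (induction w1 arbitrary: w2 rule: rev_induct)
  case Nil
  have "w2 = []"
  proof (rule ccontr)
    assume "w2 \<noteq> []"
    then obtain y where y: "y \<in> set w2" by (metis last_in_set)
    have "proj w2 (fst y, fst y) \<noteq> []" using y irr by (auto simp: proj_def filter_empty_conv)
    then show False using Nil(3) proj_Nil by (metis)
  qed
  then show ?case by simp
next
  case (snoc x w1')
  obtain u m where x: "x = (u, m)" by force
  have sh: "shuff (proj (w1' @ (u, m) # [])) u" using act_split(1)[of "[]" u w1' m] by simp
  have la: "last (proj (w1' @ (u, m) # []) (u, u)) = (u, m)" using act_split(2)[of "[]" u w1' m] by simp
  have "shuff (proj w2) u" using sh snoc.prems x by simp
  then obtain a l b where h: "w2 = a @ (u, l) # b" "\<forall>y\<in>set b. (u, fst y) \<in> E"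
    using shuff_split by blast
  have "last (proj w2 (u, u)) = (u, l)" using act_split(2)[OF h(2)] h(1) by simp
  then have lm: "l = m" using la snoc.prems x by simp
  have "proj w2 = proj ((a @ b) @ [x])" using proj_move[OF h(2)] h(1) lm x by simp
  then have "proj (w1' @ [x]) = proj ((a @ b) @ [x])" using snoc.prems(3) by simp
  then have "proj w1' = proj (a @ b)" by (rule proj_snoc_cancel)
  moreover have "w1' \<in> lists L" "a @ b \<in> lists L" "x \<in> L" using snoc.prems h by auto
  ultimately have "R w1' (a @ b)" using snoc.IH by simp
  then have r1: "R (w1' @ [x]) ((a @ b) @ [x])" using R_app \<open>x \<in> L\<close> by (metis Cons_in_lists_iff lists.Nil)
  have "R (a @ b @ [x] @ []) (a @ [x] @ b @ [])"
    apply (rule shuffle) using \<open>a @ b \<in> lists L\<close> \<open>x \<in> L\<close> h(2) x symE' by auto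
  then have "R ((a @ b) @ [x]) w2" using h(1) lm x by simp
  with r1 show ?case by (rule rtranclp_trans)
qed

definition Qv :: "'v \<Rightarrow> ('v \<times> 'a) list \<Rightarrow> bool" where
  "Qv v w \<longleftrightarrow> ((\<forall>j < length w. fst (w ! j) \<noteq> v) \<or>
            (\<exists>k < length w. (fst (w ! k), v) \<notin> E \<and>
               (\<forall>j. k \<le> j \<and> j < length w \<longrightarrow> fst (w ! j) \<noteq> v)))"

lemma Q_notshuff: "Qv v w \<Longrightarrow> \<not> shuff (proj w) v"
proof
  assume q: "Qv v w" and s: "shuff (proj w) v"
  show False
  proof (cases "\<forall>j < length w. fst (w ! j) \<noteq> v")
    case True
    then have "filter (\<lambda>y. fst y = v) w = []"
      unfolding filter_empty_conv by (metis in_set_conv_nth)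
    moreover have "proj w (v, v) \<noteq> []" using s irr unfolding shuff_def by blast
    ultimately show False using irr by (simp add: proj_def)
  next
    case False
    then obtain k where k: "k < length w" "(fst (w ! k), v) \<notin> E"
      "\<forall>j. k \<le> j \<and> j < length w \<longrightarrow> fst (w ! j) \<noteq> v" using q unfolding Qv_def by blast
    let ?t = "fst (w ! k)"
    have tv: "?t \<noteq> v" using k by auto
    have e: "(v, ?t) \<notin> E" using k(2) symE' by blast
    let ?P = "\<lambda>y. fst y = v \<or> fst y = ?t"
    have dk: "drop k w = w ! k # drop (Suc k) w" using k(1) by (simp add: Cons_nth_drop_Suc)
    have dv: "\<forall>y\<in>set (drop k w). fst y \<noteq> v"
    proof
      fix y assume "y \<in> set (drop k w)"
      then obtain i where "i < length (drop k w)" "drop k w ! i = y" by (auto simp: in_set_conv_nth)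
      then show "fst y \<noteq> v" using k(3)[rule_format, of "k + i"] by auto
    qed
    have fne: "filter ?P (drop k w) \<noteq> []" using dk by simp
    have "proj w (v, ?t) = filter ?P (take k w) @ filter ?P (drop k w)"
      using e by (simp add: proj_def flip: filter_append)
    then have "last (proj w (v, ?t)) = last (filter ?P (drop k w))" using fne by simp
    moreover have "last (filter ?P (drop k w)) \<in> set (drop k w)"
      using fne by (metis last_in_set filter_is_subset subsetD)
    ultimately have "fst (last (proj w (v, ?t))) \<noteq> v" using dv by auto
    then show False using s e unfolding shuff_def by blast
  qed
qed

lemma Q_none: "\<forall>y\<in>set w. fst y \<noteq> v \<Longrightarrow> Qv v w"
  unfolding Qv_def using nth_mem by blast

lemma Q_from:
  assumes "w = wa @ x # wb" "\<forall>y\<in>set wb. fst y \<noteq> v" "y0 \<in> set wb" "(fst y0, v) \<notin> E"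
  shows "Qv v w"
proof -
  obtain i where i: "i < length wb" "wb ! i = y0" using assms(3) by (auto simp: in_set_conv_nth)
  define k where "k = length wa + Suc i"
  have "k < length w" "w ! k = y0" using assms(1) i by (auto simp: k_def nth_append)
  moreover have "\<forall>j. k \<le> j \<and> j < length w \<longrightarrow> fst (w ! j) \<noteq> v"
  proof (intro allI impI)
    fix j assume j: "k \<le> j \<and> j < length w"
    then have "w ! j = wb ! (j - Suc (length wa))" "j - Suc (length wa) < length wb"
      using assms(1) by (auto simp: k_def nth_append)
    then show "fst (w ! j) \<noteq> v" using assms(2) by (metis nth_mem)
  qed
  ultimately show ?thesis using assms(4) unfolding Qv_def by blast
qed

lemma class_R: "p \<in> lists L \<Longrightarrow> q \<in> lists L \<Longrightarrow> gp_class Mv E p = gp_class Mv E q \<Longrightarrow> R p q"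
  using eq_equiv_class[OF _ equiv_rel] unfolding gp_class_def gp_rel_def by blast

lemma final_cases:
  assumes "gp_final Mv E v a c a'"
  shows "(c \<in> carrier (Mv v) \<and> c \<noteq> \<one>\<^bsub>Mv v\<^esub> \<and> (\<exists>w \<in> lists L. redL (w @ [(v, c)])
            \<and> gp_class Mv E (w @ [(v, c)]) = a \<and> gp_class Mv E w = a'))
   \<or> (c = \<one>\<^bsub>Mv v\<^esub> \<and> a' = a \<and> (\<exists>w \<in> lists L. redL w \<and> gp_class Mv E w = a \<and> Qv v w))"
  using assms unfolding gp_final_def Qv_def red_iff .

lemma uniq:
  assumes f1: "gp_final Mv E v a c1 a1" and f2: "gp_final Mv E v a c2 a2"
  shows "c1 = c2 \<and> a1 = a2"
proof -
  have A: "\<And>c a' w. c \<in> carrier (Mv v) \<Longrightarrow> c \<noteq> \<one>\<^bsub>Mv v\<^esub> \<Longrightarrow> w \<in> lists L \<Longrightarrow> redL (w @ [(v, c)])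
     \<Longrightarrow> Phi (w @ [(v, c)]) = proj (w @ [(v, c)]) \<and> w @ [(v, c)] \<in> lists L"
    using Phi_red by (auto simp: gp_letters_def)
  have sameclass: "\<And>p q. p \<in> lists L \<Longrightarrow> q \<in> lists L \<Longrightarrow> gp_class Mv E p = gp_class Mv E q \<Longrightarrow> Phi p = Phi q"
    using class_R Phi_R by blast
  from final_cases[OF f1] show ?thesis
  proof (elim disjE conjE bexE)
    fix w1 assume c1: "c1 \<in> carrier (Mv v)" "c1 \<noteq> \<one>\<^bsub>Mv v\<^esub>" and w1: "w1 \<in> lists L"
      "redL (w1 @ [(v, c1)])" "gp_class Mv E (w1 @ [(v, c1)]) = a" "gp_class Mv E w1 = a1"
    have P1: "Phi (w1 @ [(v, c1)]) = proj (w1 @ [(v, c1)])" "w1 @ [(v, c1)] \<in> lists L"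
      using A[OF c1 w1(1,2)] by auto
    have sh: "shuff (proj (w1 @ (v, c1) # [])) v" using act_split(1)[of "[]" v w1 c1] by simp
    from final_cases[OF f2] show ?thesis
    proof (elim disjE conjE bexE)
      fix w2 assume c2: "c2 \<in> carrier (Mv v)" "c2 \<noteq> \<one>\<^bsub>Mv v\<^esub>" and w2: "w2 \<in> lists L"
        "redL (w2 @ [(v, c2)])" "gp_class Mv E (w2 @ [(v, c2)]) = a" "gp_class Mv E w2 = a2"
      have P2: "Phi (w2 @ [(v, c2)]) = proj (w2 @ [(v, c2)])" "w2 @ [(v, c2)] \<in> lists L"
        using A[OF c2 w2(1,2)] by auto
      have "Phi (w1 @ [(v, c1)]) = Phi (w2 @ [(v, c2)])"
        by (rule sameclass[OF P1(2) P2(2)]) (simp add: w1(3) w2(3))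
      then have pe: "proj (w1 @ [(v, c1)]) = proj (w2 @ [(v, c2)])" using P1(1) P2(1) by simp
      have "last (proj (w1 @ (v, c1) # []) (v, v)) = (v, c1)" "last (proj (w2 @ (v, c2) # []) (v, v)) = (v, c2)"
        using act_split(2)[of "[]" v w1 c1] act_split(2)[of "[]" v w2 c2] by auto
      then have cc: "c1 = c2" using pe by simp
      then have "proj (w1 @ [(v, c2)]) = proj (w2 @ [(v, c2)])" using pe by simp
      then have "proj w1 = proj w2" by (rule proj_snoc_cancel)
      then have "R w1 w2" using proj_eq_R[OF w1(1) w2(1)] by simp
      then have "gp_class Mv E w1 = gp_class Mv E w2" using class_eq[OF _ w1(1) w2(1)] by simp
      then show ?thesis using w1(4) w2(4) cc by simp
    next
      fix w2 assume "c2 = \<one>\<^bsub>Mv v\<^esub>" "a2 = a" "w2 \<in> lists L" "redL w2" "gp_class Mv E w2 = a" "Qv v w2"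
      then have "Phi w2 = proj w2" "\<not> shuff (proj w2) v" using Phi_red Q_notshuff by auto
      moreover have "Phi w2 = Phi (w1 @ [(v, c1)])"
        by (rule sameclass[OF \<open>w2 \<in> lists L\<close> P1(2)]) (simp add: \<open>gp_class Mv E w2 = a\<close> w1(3))
      ultimately show ?thesis using sh P1 by simp
    qed
  next
    fix w1 assume h1: "c1 = \<one>\<^bsub>Mv v\<^esub>" "a1 = a" "w1 \<in> lists L" "redL w1" "gp_class Mv E w1 = a" "Qv v w1"
    have P1: "Phi w1 = proj w1" "\<not> shuff (proj w1) v" using h1 Phi_red Q_notshuff by auto
    from final_cases[OF f2] show ?thesis
    proof (elim disjE conjE bexE)
      fix w2 assume c2: "c2 \<in> carrier (Mv v)" "c2 \<noteq> \<one>\<^bsub>Mv v\<^esub>" and w2: "w2 \<in> lists L"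
        "redL (w2 @ [(v, c2)])" "gp_class Mv E (w2 @ [(v, c2)]) = a" "gp_class Mv E w2 = a2"
      have P2: "Phi (w2 @ [(v, c2)]) = proj (w2 @ [(v, c2)])" "w2 @ [(v, c2)] \<in> lists L"
        using A[OF c2 w2(1,2)] by auto
      have sh: "shuff (proj (w2 @ (v, c2) # [])) v" using act_split(1)[of "[]" v w2 c2] by simp
      have "Phi w1 = Phi (w2 @ [(v, c2)])"
        by (rule sameclass[OF h1(3) P2(2)]) (simp add: h1(5) w2(3))
      then show ?thesis using sh P1 P2 by simp
    next
      fix w2 assume "c2 = \<one>\<^bsub>Mv v\<^esub>" "a2 = a"
      then show ?thesis using h1 by simp
    qed
  qed
qed

lemma exist:
  assumes "a \<in> gp_carrier Mv E"
  shows "\<exists>c a'. gp_final Mv E v a c a'"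
proof -
  obtain w0 where w0: "a = gp_rel Mv E `` {w0}" "w0 \<in> lists L"
    using assms unfolding gp_carrier_def by (metis quotientE)
  obtain w where w: "R w0 w \<and> w \<in> lists L" "\<forall>y. R w0 y \<and> y \<in> lists L \<longrightarrow> length w \<le> length y"
    using ex_has_least_nat[of "\<lambda>w. R w0 w \<and> w \<in> lists L" w0 length] w0 by auto
  have minw: "\<And>y. R w y \<Longrightarrow> y \<in> lists L \<Longrightarrow> length w \<le> length y"
    using w by (meson rtranclp_trans)
  have rw: "redL w" using min_red w(1) minw by blast
  have cw: "gp_class Mv E w = a" using class_eq[of w0 w] w w0 by (simp add: gp_class_def)
  show ?thesis
  proof (cases "Qv v w")
    case True
    then have "gp_final Mv E v a \<one>\<^bsub>Mv v\<^esub> a"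
      unfolding gp_final_def using w rw cw red_iff unfolding Qv_def by blast
    then show ?thesis by blast
  next
    case False
    then have "filter (\<lambda>y. fst y = v) w \<noteq> []" using Q_none by (auto simp: filter_empty_conv)
    then obtain wa z wb where h: "w = wa @ z # wb" "fst z = v" "\<forall>y\<in>set wb. fst y \<noteq> v"
      using filter_last_split by blast
    have adj: "\<forall>y\<in>set wb. (fst y, v) \<in> E" using Q_from[OF h(1,3)] False by blast
    obtain c where z: "z = (v, c)" using h(2) by (metis prod.collapse)
    have l: "wa \<in> lists L" "wb \<in> lists L" "z \<in> L" using w h by auto
    have "R (wa @ wb @ [z] @ []) (wa @ [z] @ wb @ [])"
      apply (rule shuffle) using l adj h(2) by auto
    then have r: "R w (wa @ wb @ [z])" using h(1) by (simp add: rtranclp_symclp_sym)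
    have w'l: "wa @ wb @ [z] \<in> lists L" using l by auto
    have "redL (wa @ wb @ [z])"
    proof (rule min_red[OF w'l], intro allI impI)
      fix y assume "R (wa @ wb @ [z]) y \<and> y \<in> lists L"
      then have "length w \<le> length y" using minw r by (meson rtranclp_trans)
      then show "length (wa @ wb @ [z]) \<le> length y" using h(1) by simp
    qed
    moreover have "gp_class Mv E (wa @ wb @ [z]) = a" using cw class_eq[OF r] w w'l by simp
    moreover have "c \<in> carrier (Mv v)" "c \<noteq> \<one>\<^bsub>Mv v\<^esub>" using l z by (auto simp: gp_letters_def)
    ultimately have "gp_final Mv E v a c (gp_class Mv E (wa @ wb))"
      unfolding gp_final_def red_iff using l z
      by (intro disjI1 conjI bexI[of _ "wa @ wb"]) auto
    then show ?thesis by blast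
  qed
qed

end

theorem proposition1p3:
  fixes Mv :: "'v \<Rightarrow> ('a, 'b) monoid_scheme" and E :: "('v \<times> 'v) set"
  assumes "\<And>v. monoid (Mv v)"
    and "sym E"
    and "\<And>v. (v, v) \<notin> E"
  shows "\<forall>v. \<forall>a \<in> gp_carrier Mv E.
           (\<exists>!c. \<exists>a'. gp_final Mv E v a c a') \<and> (\<exists>!a'. \<exists>c. gp_final Mv E v a c a')"
proof -
  interpret gpl Mv E by (rule gpl.intro) (use assms in auto)
  show ?thesis
  proof (intro allI ballI conjI)
    fix v a assume a: "a \<in> gp_carrier Mv E"
    obtain c a' where f: "gp_final Mv E v a c a'" using exist[OF a] by blast
    show "\<exists>!c. \<exists>a'. gp_final Mv E v a c a'"
      using f uniq by blast
    show "\<exists>!a'. \<exists>c. gp_final Mv E v a c a'"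
      using f uniq by blast
  qed
qed

end
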